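(* Let $(C,\mathbf A)$, $C\in\mathcal L(\mathcal X,\mathcal Y)$, $\mathbf A\in\mathcal L(\mathcal X)^d$, be an output-stable pair. Then (1) $(C,\mathbf A)$ is also $\mathbf a$-output-stable and $\mathcal G^{\mathbf a}_{C,\mathbf A}\le\mathcal G_{C,\mathbf A}$; (2) equality $\mathcal G^{\mathbf a}_{C,\mathbf A}=\mathcal G_{C,\mathbf A}$ holds if and only if $\mathbf A$ is $C$-abelian, i.e. $C\mathbf A^v=C\mathbf A^u$ whenever $u,v\in\mathcal F_d$ with $\mathbf a(u)=\mathbf a(v)$.
   Context: $\mathcal F_d$: free semigroup of words on $\{1,\dots,d\}$; $\mathbf A^v=A_{i_N}\cdots A_{i_1}$ for $v=i_N\cdots i_1$. Output-stable: $x\mapsto\{C\mathbf A^vx\}_v$ bounded into $\ell^2_{\mathcal Y}(\mathcal F_d)$; $\mathcal G_{C,\mathbf A}=\sum_v(\mathbf A^v)^*C^*C\mathbf A^v$. Abelianization $\mathbf a\colon\mathcal F_d\to\mathbb Z^d_+$: $\mathbf a(i_N\cdots i_1)=(n_1,\dots,n_d)$, $n_k=\#\{\ell:i_\ell=k\}$; $|\mathbf n|=\sum n_k$, $\mathbf n!=\prod n_k!$, $\boldsymbol\lambda^{\mathbf n}=\prod\lambda_k^{n_k}$. Arveson space $\mathcal H_{\mathcal Y}(k_d)$: power series $\sum_{\mathbf n}f_{\mathbf n}\boldsymbol\lambda^{\mathbf n}$ with $\|f\|^2=\sum_{\mathbf n}\frac{\mathbf n!}{|\mathbf n|!}\|f_{\mathbf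 n}\|^2_{\mathcal Y}<\infty$. $(C,\mathbf A)$ is $\mathbf a$-output-stable if $\widehat{\mathcal O}^{\mathbf a}_{C,\mathbf A}\colon x\mapsto\sum_{\mathbf n}\big(\sum_{v\in\mathbf a^{-1}(\mathbf n)}C\mathbf A^vx\big)\boldsymbol\lambda^{\mathbf n}$ is bounded $\mathcal X\to\mathcal H_{\mathcal Y}(k_d)$, and $\mathcal G^{\mathbf a}_{C,\mathbf A}=(\widehat{\mathcal O}^{\mathbf a}_{C,\mathbf A})^*\widehat{\mathcal O}^{\mathbf a}_{C,\mathbf A}$. *)

theory Defs
  imports "HOL-Analysis.Analysis"
begin

text \<open>Letters of the free semigroup are 0,...,d-1 (instead of 1,...,d).
  A word v = i_N ... i_1 is the list [i_N, ..., i_1]; the empty list is the unit word.\<close>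

definition words :: "nat \<Rightarrow> nat list set" where
  "words d = {v. set v \<subseteq> {..<d}}"

primrec opw :: "(nat \<Rightarrow> ('x::real_normed_vector \<Rightarrow>\<^sub>L 'x)) \<Rightarrow> nat list \<Rightarrow> ('x \<Rightarrow>\<^sub>L 'x)" where
  "opw A [] = id_blinfun"
| "opw A (i # v) = A i o\<^sub>L opw A v"

definition abel :: "nat list \<Rightarrow> (nat \<Rightarrow> nat)" where
  "abel v = (\<lambda>k. count_list v k)"

definition multi :: "nat \<Rightarrow> (nat \<Rightarrow> nat) set" where
  "multi d = {n. \<forall>k\<ge>d. n k = 0}"

definition afiber :: "nat \<Rightarrow> (nat \<Rightarrow> nat) \<Rightarrow> nat list set" where
  "afiber d n = {v \<in> words d. abel v = n}"

definition arv_weight :: "nat \<Rightarrow> (nat \<Rightarrow> nat) \<Rightarrow> real" where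
  "arv_weight d n = (\<Prod>k<d. fact (n k)) / fact (\<Sum>k<d. n k)"

definition output_stable ::
  "nat \<Rightarrow> ('x::real_inner \<Rightarrow>\<^sub>L 'y::real_inner) \<Rightarrow> (nat \<Rightarrow> ('x \<Rightarrow>\<^sub>L 'x)) \<Rightarrow> bool" where
  "output_stable d C A \<longleftrightarrow>
     (\<forall>x. (\<lambda>v. (norm (C (opw A v x)))\<^sup>2) summable_on words d) \<and>
     (\<exists>M. \<forall>x. infsum (\<lambda>v. (norm (C (opw A v x)))\<^sup>2) (words d) \<le> M * (norm x)\<^sup>2)"

text \<open>Coefficient of lambda^n in the a-observability series.\<close>
definition acoef ::
  "nat \<Rightarrow> ('x::real_normed_vector \<Rightarrow>\<^sub>L 'y::real_normed_vector) \<Rightarrow> (nat \<Rightarrow> ('x \<Rightarrow>\<^sub>L 'x))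
   \<Rightarrow> (nat \<Rightarrow> nat) \<Rightarrow> 'x \<Rightarrow> 'y" where
  "acoef d C A n x = (\<Sum>v\<in>afiber d n. C (opw A v x))"

definition a_output_stable ::
  "nat \<Rightarrow> ('x::real_inner \<Rightarrow>\<^sub>L 'y::real_inner) \<Rightarrow> (nat \<Rightarrow> ('x \<Rightarrow>\<^sub>L 'x)) \<Rightarrow> bool" where
  "a_output_stable d C A \<longleftrightarrow>
     (\<forall>x. (\<lambda>n. arv_weight d n * (norm (acoef d C A n x))\<^sup>2) summable_on multi d) \<and>
     (\<exists>M. \<forall>x. infsum (\<lambda>n. arv_weight d n * (norm (acoef d C A n x))\<^sup>2) (multi d)
              \<le> M * (norm x)\<^sup>2)"

text \<open>Gramians G = O^* O, characterised as the bounded operator whose bilinear form is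
  <G x, y> = <O x, O y> (inner product of the output space).\<close>
definition gramian ::
  "nat \<Rightarrow> ('x::{real_inner,complete_space} \<Rightarrow>\<^sub>L 'y::{real_inner,complete_space})
   \<Rightarrow> (nat \<Rightarrow> ('x \<Rightarrow>\<^sub>L 'x)) \<Rightarrow> ('x \<Rightarrow>\<^sub>L 'x)" where
  "gramian d C A = (THE G::(_ \<Rightarrow>\<^sub>L _). \<forall>x y. inner (blinfun_apply G x) y =
      infsum (\<lambda>v. inner (C (opw A v x)) (C (opw A v y))) (words d))"

definition a_gramian ::
  "nat \<Rightarrow> ('x::{real_inner,complete_space} \<Rightarrow>\<^sub>L 'y::{real_inner,complete_space})
   \<Rightarrow> (nat \<Rightarrow> ('x \<Rightarrow>\<^sub>L 'x)) \<Rightarrow> ('x \<Rightarrow>\<^sub>L 'x)" where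
  "a_gramian d C A = (THE G::(_ \<Rightarrow>\<^sub>L _). \<forall>x y. inner (blinfun_apply G x) y =
      infsum (\<lambda>n. arv_weight d n * inner (acoef d C A n x) (acoef d C A n y)) (multi d))"

definition op_le :: "('x::real_inner \<Rightarrow>\<^sub>L 'x) \<Rightarrow> ('x \<Rightarrow>\<^sub>L 'x) \<Rightarrow> bool" where
  "op_le G H \<longleftrightarrow> (\<forall>x. inner (G x) x \<le> inner (H x) x)"

definition C_abelian ::
  "nat \<Rightarrow> ('x::real_normed_vector \<Rightarrow>\<^sub>L 'y::real_normed_vector) \<Rightarrow> (nat \<Rightarrow> ('x \<Rightarrow>\<^sub>L 'x)) \<Rightarrow> bool" where
  "C_abelian d C A \<longleftrightarrow>
     (\<forall>u\<in>words d. \<forall>v\<in>words d. abel u = abel v \<longrightarrow> C o\<^sub>L opw A u = C o\<^sub>L opw A v)"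

end

theory Submission
  imports Defs "HOL-Combinatorics.Multiset_Permutations"
begin

definition mfib :: "nat \<Rightarrow> (nat \<Rightarrow> nat) \<Rightarrow> nat multiset" where
  "mfib d n = (\<Sum>k<d. replicate_mset (n k) k)"

lemma count_mfib: "count (mfib d n) k = (if k < d then n k else 0)"
  by (simp add: mfib_def count_sum)

lemma set_mfib: "set_mset (mfib d n) \<subseteq> {..<d}"
  by (auto simp: count_mfib simp flip: count_greater_zero_iff split: if_splits)

lemma afiber_perm:
  assumes "n \<in> multi d"
  shows "afiber d n = permutations_of_multiset (mfib d n)"
proof (intro set_eqI iffI)
  fix v assume "v \<in> afiber d n"
  hence v: "set v \<subseteq> {..<d}" "\<And>k. count_list v k = n k"
    by (auto simp: afiber_def words_def abel_def)
  have "mset v = mfib d n"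
  proof (rule multiset_eqI)
    fix k show "count (mset v) k = count (mfib d n) k"
      using v assms by (auto simp: count_mfib count_mset multi_def)
  qed
  thus "v \<in> permutations_of_multiset (mfib d n)" by (simp add: permutations_of_multiset_def)
next
  fix v assume "v \<in> permutations_of_multiset (mfib d n)"
  hence m: "mset v = mfib d n" by (simp add: permutations_of_multiset_def)
  have "set v \<subseteq> {..<d}" using set_mfib[of d n] m by (metis set_mset_mset)
  moreover have "abel v = n"
  proof
    fix k
    have "count_list v k = count (mset v) k" by (simp add: count_mset)
    thus "abel v k = n k" using m assms by (auto simp: abel_def count_mfib multi_def)
  qed
  ultimately show "v \<in> afiber d n" by (simp add: afiber_def words_def)
qed

lemma finite_afiber: "finite (afiber d n)"
proof (cases "n \<in> multi d")
  case True thus ?thesis by (simp add: afiber_perm)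
next
  case False
  then obtain k where k: "k \<ge> d" "n k \<noteq> 0" unfolding multi_def by blast
  have "v \<notin> afiber d n" for v
  proof
    assume v: "v \<in> afiber d n"
    hence s: "set v \<subseteq> {..<d}" unfolding afiber_def words_def by blast
    from v have "abel v = n" unfolding afiber_def by blast
    hence "count_list v k = n k" unfolding abel_def by metis
    hence "count_list v k \<noteq> 0" using k by simp
    hence "k \<in> set v" by (simp add: count_list_0_iff)
    thus False using s k by auto
  qed
  hence "afiber d n = {}" by blast
  thus ?thesis by simp
qed

lemma card_afiber:
  assumes "n \<in> multi d"
  shows "arv_weight d n * real (card (afiber d n)) = 1"
proof -
  let ?M = "mfib d n"
  have aux: "card (permutations_of_multiset ?M) * (\<Prod>x\<in>set_mset ?M. fact (count ?M x)) = fact (size ?M)"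
    by (rule card_permutations_of_multiset_aux)
  have p: "(\<Prod>x\<in>set_mset ?M. fact (count ?M x) :: nat) = (\<Prod>k<d. fact (n k))"
  proof -
    have "(\<Prod>x\<in>set_mset ?M. fact (count ?M x) :: nat) = (\<Prod>k<d. fact (count ?M k))"
      proof (rule prod.mono_neutral_left)
        show "\<forall>i\<in>{..<d} - set_mset ?M. fact (count ?M i) = (1::nat)"
        proof
          fix i assume "i \<in> {..<d} - set_mset ?M"
          hence "count ?M i = 0" by (simp add: not_in_iff)
          thus "fact (count ?M i) = (1::nat)" by simp
        qed
      qed (use set_mfib in auto)
    thus ?thesis by (simp add: count_mfib)
  qed
  have s: "size ?M = (\<Sum>k<d. n k)"
  proof -
    have "size ?M = (\<Sum>x\<in>set_mset ?M. count ?M x)" by (rule size_multiset_overloaded_eq)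
    also have "\<dots> = (\<Sum>k<d. count ?M k)"
      proof (rule sum.mono_neutral_left)
        show "\<forall>i\<in>{..<d} - set_mset ?M. count ?M i = 0"
          by (simp add: not_in_iff)
      qed (use set_mfib in auto)
    finally show ?thesis by (simp add: count_mfib)
  qed
  have nat_eq: "card (afiber d n) * (\<Prod>k<d. fact (n k)) = (fact (\<Sum>k<d. n k) :: nat)"
    using aux unfolding p s afiber_perm[OF assms] .
  have "real (card (afiber d n) * (\<Prod>k<d. fact (n k))) = real (fact (\<Sum>k<d. n k) :: nat)"
    using nat_eq by (rule arg_cong)
  hence "real (card (afiber d n)) * (\<Prod>k<d. fact (n k)) = fact (\<Sum>k<d. n k)"
    by (simp add: of_nat_prod)
  thus ?thesis unfolding arv_weight_def
    by (simp add: field_simps)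
qed

lemma card_afiber_pos:
  assumes "n \<in> multi d" shows "card (afiber d n) > 0"
  using card_afiber[OF assms] by (cases "card (afiber d n)") auto

lemma abel_multi: "v \<in> words d \<Longrightarrow> abel v \<in> multi d"
  by (auto simp: words_def abel_def multi_def count_list_0_iff)

lemma bij_Sigma: "bij_betw snd (Sigma (multi d) (afiber d)) (words d)"
  unfolding bij_betw_def inj_on_def
  by (auto simp: afiber_def abel_multi image_iff)

lemma partition_sum:
  fixes f :: "nat list \<Rightarrow> 'b::banach"
  assumes "f summable_on words d"
  shows "(\<lambda>n. \<Sum>v\<in>afiber d n. f v) summable_on multi d"
    and "infsum (\<lambda>n. \<Sum>v\<in>afiber d n. f v) (multi d) = infsum f (words d)"
proof -
  have s0: "(\<lambda>x. f (snd x)) summable_on Sigma (multi d) (afiber d)"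
    using summable_on_reindex_bij_betw[OF bij_Sigma[of d], of f] assms by blast
  have s: "(\<lambda>(n,v). f v) summable_on Sigma (multi d) (afiber d)"
    using s0 by (simp add: case_prod_unfold)
  have "(\<lambda>n. infsum (\<lambda>v. f v) (afiber d n)) summable_on multi d"
    using summable_on_Sigma_banach[of "\<lambda>n v. f v", OF s] .
  thus "(\<lambda>n. \<Sum>v\<in>afiber d n. f v) summable_on multi d"
    by (simp add: finite_afiber)
  have "infsum (\<lambda>n. infsum (\<lambda>v. f v) (afiber d n)) (multi d) = infsum (\<lambda>(n,v). f v) (Sigma (multi d) (afiber d))"
    using infsum_Sigma'_banach[of "\<lambda>n v. f v", OF s] .
  also have "\<dots> = infsum f (words d)"
    using infsum_reindex_bij_betw[OF bij_Sigma[of d], of f] by (simp add: case_prod_unfold)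
  finally show "infsum (\<lambda>n. \<Sum>v\<in>afiber d n. f v) (multi d) = infsum f (words d)"
    by (simp add: finite_afiber)
qed

lemma riesz:
  fixes f :: "'a::{real_inner,complete_space} \<Rightarrow> real"
  assumes bl: "bounded_linear f"
  shows "\<exists>y. \<forall>z. f z = inner y z"
proof -
  have fadd: "f (a + b) = f a + f b" for a b using bl by (simp add: linear_simps)
  have fscl: "f (c *\<^sub>R a) = c * f a" for c a using bl by (simp add: linear_simps)
  obtain K where K: "K > 0" "\<And>x. norm (f x) \<le> norm x * K"
    using bounded_linear.pos_bounded[OF bl] by blast
  define J where "J y = (norm y)^2/2 - f y" for y
  have Jlow: "J y \<ge> -((K^2)/2)" for y
  proof -
    have h1: "f y \<le> norm y * K" using K(2)[of y] by simp
    have h2: "0 \<le> (norm y - K)^2" by simp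
    have h3: "(norm y - K)^2 = (norm y)^2 + K^2 - 2 * (norm y * K)" by (simp add: power2_diff)
    show ?thesis unfolding J_def using h1 h2 h3 by linarith
  qed
  define m where "m = Inf (range J)"
  have bdd: "bdd_below (range J)" by (rule bdd_belowI[of _ "-((K^2)/2)"]) (auto intro: Jlow)
  have m_le: "m \<le> J y" for y unfolding m_def using bdd by (simp add: cInf_lower)
  have "\<exists>y. J y < m + inverse (real (Suc k))" for k
  proof -
    have "Inf (range J) < m + inverse (real (Suc k))" unfolding m_def by simp
    from cInf_lessD[OF _ this] show ?thesis by auto
  qed
  then obtain s where s: "\<And>k. J (s k) < m + inverse (real (Suc k))" by metis
  have par: "J a + J b - 2 * J ((1/2) *\<^sub>R (a + b)) = (norm (a - b))^2/4" for a b
    unfolding J_def power2_norm_eq_inner using fadd fscl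
    by (simp add: inner_add_left inner_add_right inner_diff_left inner_diff_right
        inner_commute[of b a] field_simps)
  have sd: "(norm (s i - s j))^2 \<le> 4 * (inverse (real (Suc i)) + inverse (real (Suc j)))" for i j
  proof -
    have "J (s i) + J (s j) - 2 * J ((1/2) *\<^sub>R (s i + s j)) \<le>
          (m + inverse (real (Suc i))) + (m + inverse (real (Suc j))) - 2 * m"
      using s[of i] s[of j] m_le[of "(1/2) *\<^sub>R (s i + s j)"] by linarith
    thus ?thesis using par[of "s i" "s j"] by simp
  qed
  have "Cauchy s"
  proof (rule metric_CauchyI)
    fix e :: real assume e: "e > 0"
    obtain N where N: "8 / e^2 < real N" using reals_Archimedean2 by blast
    have e2: "e^2 > 0" using e by simp
    have N8: "8 / real (Suc N) < e^2"
    proof -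
      have "8 < e^2 * real N" using N e2 by (simp add: field_simps)
      also have "\<dots> \<le> e^2 * real (Suc N)" using e2 by simp
      finally show ?thesis by (simp add: field_simps)
    qed
    show "\<exists>M. \<forall>i\<ge>M. \<forall>j\<ge>M. dist (s i) (s j) < e"
    proof (intro exI allI impI)
      fix i j assume ij: "N \<le> i" "N \<le> j"
      have i1: "inverse (real (Suc i)) \<le> inverse (real (Suc N))"
        by (rule le_imp_inverse_le) (use ij in auto)
      have j1: "inverse (real (Suc j)) \<le> inverse (real (Suc N))"
        by (rule le_imp_inverse_le) (use ij in auto)
      have "8 / real (Suc N) = 4 * inverse (real (Suc N)) + 4 * inverse (real (Suc N))"
        by (simp add: divide_inverse)
      hence "(norm (s i - s j))^2 \<le> 8 / real (Suc N)"
      proof -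
        have "(norm (s i - s j))^2 \<le> 4 * inverse (real (Suc i)) + 4 * inverse (real (Suc j))"
          using sd[of i j] by (simp only: distrib_left)
        thus ?thesis using i1 j1 \<open>8 / real (Suc N) = _\<close> by linarith
      qed
      hence "(norm (s i - s j))^2 < e^2" using N8 by linarith
      hence "norm (s i - s j) < e" using e by (simp add: power_less_imp_less_base)
      thus "dist (s i) (s j) < e" by (simp add: dist_norm)
    qed
  qed
  then obtain y where lim: "s \<longlonglongrightarrow> y" using Cauchy_convergent_iff convergent_def by blast
  have "(\<lambda>k. J (s k)) \<longlonglongrightarrow> J y"
    unfolding J_def using lim bounded_linear.tendsto[OF bl lim]
    by (intro tendsto_intros) auto
  moreover have "(\<lambda>k. J (s k)) \<longlonglongrightarrow> m"
  proof (rule tendsto_sandwich[of "\<lambda>_. m" _ _ "\<lambda>k. m + inverse (real (Suc k))"])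
    show "\<forall>\<^sub>F n in sequentially. m \<le> J (s n)" using m_le by simp
    show "\<forall>\<^sub>F n in sequentially. J (s n) \<le> m + inverse (real (Suc n))" using s by (intro always_eventually allI less_imp_le)
    show "(\<lambda>_. m) \<longlonglongrightarrow> m" by simp
    show "(\<lambda>k. m + inverse (real (Suc k))) \<longlonglongrightarrow> m"
      using tendsto_add[OF tendsto_const[of m] LIMSEQ_inverse_real_of_nat] by simp
  qed
  ultimately have Jy: "J y = m" using LIMSEQ_unique by blast
  have "f z = inner y z" for z
  proof -
    define a where "a = inner y z - f z"
    define b where "b = (norm z)^2/2"
    have b0: "b \<ge> 0" unfolding b_def by simp
    have exp: "J (y + t *\<^sub>R z) - J y = t * a + t^2 * b" for t
      unfolding J_def a_def b_def power2_norm_eq_inner using fadd fscl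
      by (simp add: inner_add_left inner_add_right inner_commute[of z y] field_simps power2_eq_square)
    define t where "t = - a / (2*b+1)"
    have "0 \<le> t * a + t^2 * b" using exp[of t] m_le[of "y + t *\<^sub>R z"] Jy by linarith
    moreover have "(2*b+1)^2 * (t * a + t^2 * b) = -(a^2 * (b+1))"
    proof -
      have tt: "t*(2*b+1) = -a" using b0 by (simp add: t_def)
      have "(2*b+1)^2 * (t*a + t^2*b) = (t*(2*b+1))*a*(2*b+1) + (t*(2*b+1))^2 * b"
        by (simp add: power2_eq_square algebra_simps)
      also have "\<dots> = -(a^2*(b+1))" unfolding tt by (simp add: power2_eq_square algebra_simps)
      finally show ?thesis .
    qed
    ultimately have "0 \<le> -(a^2 * (b+1))" using b0 by (metis zero_le_mult_iff zero_le_power2)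
    hence "a^2 \<le> 0" using b0 by (simp add: mult_le_0_iff)
    hence "a = 0" by simp
    thus ?thesis unfolding a_def by simp
  qed
  thus ?thesis by blast
qed

lemma inner_ext:
  fixes a b :: "'a::real_inner"
  assumes "\<And>z. inner a z = inner b z"
  shows "a = b"
proof -
  have "inner (a - b) (a - b) = 0" using assms[of "a - b"] by (simp add: inner_diff_left)
  thus ?thesis by simp
qed

lemma form_rep:
  fixes B :: "'a::{real_inner,complete_space} \<Rightarrow> 'a \<Rightarrow> real"
  assumes addB: "\<And>x y z. B (x+y) z = B x z + B y z"
    and sclB: "\<And>c x z. B (c *\<^sub>R x) z = c * B x z"
    and symB: "\<And>x y. B x y = B y x"
    and posB: "\<And>x. 0 \<le> B x x"
    and bndB0: "\<And>x. B x x \<le> M * (norm x)^2"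
  shows "\<exists>!G::'a \<Rightarrow>\<^sub>L 'a. \<forall>x y. inner (G x) y = B x y"
proof -
  define M' where "M' = max M 0"
  have M'0: "M' \<ge> 0" unfolding M'_def by simp
  have bndB: "B x x \<le> M' * (norm x)^2" for x
    using bndB0[of x] unfolding M'_def by (metis max.cobounded1 mult_right_mono order_trans zero_le_power2)
  have addB2: "B z (x+y) = B z x + B z y" for x y z using addB symB by metis
  have sclB2: "B z (c *\<^sub>R x) = c * B z x" for c x z using sclB symB by metis
  have diffB: "B (x - y) z = B x z - B y z" for x y z
  proof -
    have "B (x + (-1) *\<^sub>R y) z = B x z + (-1) * B y z" by (simp only: addB sclB)
    thus ?thesis by simp
  qed
  have diffB2: "B z (x - y) = B z x - B z y" for x y z using diffB symB by metis
  have B0: "B 0 z = 0" for z using sclB[of 0 z z] by simp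
  have B02: "B z 0 = 0" for z using B0 symB by metis
  have polar: "4 * B x y = B (x+y) (x+y) - B (x-y) (x-y)" for x y
    by (simp add: addB addB2 diffB diffB2 symB[of y x])
  have para: "(norm (x+y))^2 + (norm (x-y))^2 = 2 * (norm x)^2 + 2 * (norm y)^2" for x y :: 'a
    unfolding power2_norm_eq_inner by (simp add: inner_add_left inner_add_right inner_diff_left inner_diff_right)
  have b1: "\<bar>B x y\<bar> \<le> M' / 2 * ((norm x)^2 + (norm y)^2)" for x y
  proof -
    have "4 * B x y \<le> M' * (norm (x+y))^2" using polar[of x y] bndB[of "x+y"] posB[of "x-y"] by linarith
    moreover have "- (4 * B x y) \<le> M' * (norm (x-y))^2" using polar[of x y] bndB[of "x-y"] posB[of "x+y"] by linarith
    moreover have "0 \<le> M' * (norm (x+y))^2" "0 \<le> M' * (norm (x-y))^2" using M'0 by simp_all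
    moreover have "M' * (norm (x+y))^2 + M' * (norm (x-y))^2 = 2 * M' * ((norm x)^2 + (norm y)^2)"
    proof -
      have "M' * (norm (x+y))^2 + M' * (norm (x-y))^2 = M' * ((norm (x+y))^2 + (norm (x-y))^2)"
        by (simp add: distrib_left)
      also have "\<dots> = M' * (2 * (norm x)^2 + 2 * (norm y)^2)" by (simp only: para)
      finally show ?thesis by (simp add: algebra_simps)
    qed
    ultimately show ?thesis by (simp add: abs_le_iff) 
  qed
  have b2: "\<bar>B x y\<bar> \<le> M' * norm x * norm y" for x y
  proof (cases "x = 0 \<or> y = 0")
    case True thus ?thesis using B0 B02 by auto
  next
    case False
    define u where "u = (1 / norm x) *\<^sub>R x"
    define v where "v = (1 / norm y) *\<^sub>R y"
    have nu: "norm u = 1" "norm v = 1" using False by (simp_all add: u_def v_def)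
    have xu: "x = norm x *\<^sub>R u" "y = norm y *\<^sub>R v" using False by (simp_all add: u_def v_def)
    have "B x y = norm x * norm y * B u v"
      by (subst xu(1), subst xu(2)) (simp add: sclB sclB2)
    moreover have "\<bar>B u v\<bar> \<le> M'" using b1[of u v] nu by simp
    ultimately show ?thesis
      by (simp add: abs_mult mult.assoc mult_left_mono mult.commute[of M'])
  qed
  have "\<forall>x. \<exists>g. \<forall>z. B x z = inner g z"
  proof
    fix x
    have "bounded_linear (B x)"
    proof (rule bounded_linear_intro[where K = "M' * norm x"])
      show "B x (y + z) = B x y + B x z" for y z by (rule addB2)
      show "B x (r *\<^sub>R y) = r *\<^sub>R B x y" for r y by (simp add: sclB2)
      show "norm (B x y) \<le> norm y * (M' * norm x)" for y using b2[of x y] by (simp add: algebra_simps)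
    qed
    thus "\<exists>g. \<forall>z. B x z = inner g z" by (rule riesz)
  qed
  then obtain g where g: "\<And>x z. B x z = inner (g x) z" by metis
  have gadd: "g (x + y) = g x + g y" for x y
    by (rule inner_ext) (simp add: g[symmetric] addB inner_add_left)
  have gscl: "g (c *\<^sub>R x) = c *\<^sub>R g x" for c x
    by (rule inner_ext) (simp add: g[symmetric] sclB)
  have gb: "norm (g x) \<le> norm x * M'" for x
  proof (cases "g x = 0")
    case True thus ?thesis using M'0 by simp
  next
    case False
    have "(norm (g x))^2 = B x (g x)" by (simp add: g power2_norm_eq_inner)
    also have "\<dots> \<le> M' * norm x * norm (g x)" using b2[of x "g x"] by simp
    finally have "norm (g x) * norm (g x) \<le> (M' * norm x) * norm (g x)" by (simp add: power2_eq_square)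
    hence "norm (g x) \<le> M' * norm x" using False by simp
    thus ?thesis by (simp add: mult.commute)
  qed
  have blg: "bounded_linear g" by (rule bounded_linear_intro[OF gadd gscl gb])
  have ga: "blinfun_apply (Blinfun g) = g" using blg by (rule bounded_linear_Blinfun_apply)
  show ?thesis
  proof (rule ex1I[of _ "Blinfun g"])
    show "\<forall>x y. inner (blinfun_apply (Blinfun g) x) y = B x y"
      unfolding ga by (intro allI) (rule g[symmetric])
  next
    fix G :: "'a \<Rightarrow>\<^sub>L 'a" assume G: "\<forall>x y. inner (G x) y = B x y"
    show "G = Blinfun g"
    proof (rule blinfun_eqI)
      fix x show "blinfun_apply G x = blinfun_apply (Blinfun g) x"
        unfolding ga by (rule inner_ext) (simp only: G g[symmetric])
    qed
  qed
qed

lemma summable_inner: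
  fixes a b :: "'i \<Rightarrow> 'z::real_inner" and w :: "'i \<Rightarrow> real"
  assumes w0: "\<And>i. i \<in> S \<Longrightarrow> 0 \<le> w i"
    and sa: "(\<lambda>i. w i * (norm (a i))^2) summable_on S"
    and sb: "(\<lambda>i. w i * (norm (b i))^2) summable_on S"
  shows "(\<lambda>i. w i * inner (a i) (b i)) summable_on S"
proof -
  have sg: "(\<lambda>i. w i * (norm (a i))^2 + w i * (norm (b i))^2) summable_on S"
    using summable_on_add[OF sa sb] .
  hence "(\<lambda>i. norm (w i * (norm (a i))^2 + w i * (norm (b i))^2)) summable_on S"
    by (rule summable_on_iff_abs_summable_on_real[THEN iffD1])
  hence "(\<lambda>i. norm (w i * inner (a i) (b i))) summable_on S"
  proof (rule Infinite_Sum.abs_summable_on_comparison_test)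
    fix i assume i: "i \<in> S"
    have cs: "\<bar>inner (a i) (b i)\<bar> \<le> norm (a i) * norm (b i)" by (rule Cauchy_Schwarz_ineq2)
    have h1: "0 \<le> (norm (a i) - norm (b i))^2" by (rule zero_le_power2)
    have h2: "(norm (a i) - norm (b i))^2 = (norm (a i))^2 + (norm (b i))^2 - 2 * (norm (a i) * norm (b i))"
      by (simp add: power2_diff)
    have h3: "0 \<le> norm (a i) * norm (b i)" by simp
    have "norm (a i) * norm (b i) \<le> (norm (a i))^2 + (norm (b i))^2"
      using h1 h2 h3 by linarith
    hence "\<bar>inner (a i) (b i)\<bar> \<le> (norm (a i))^2 + (norm (b i))^2" using cs by linarith
    hence "\<bar>w i * inner (a i) (b i)\<bar> \<le> w i * ((norm (a i))^2 + (norm (b i))^2)"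
      using w0[OF i] by (simp add: abs_mult mult_left_mono)
    thus "norm (w i * inner (a i) (b i)) \<le> norm (w i * (norm (a i))^2 + w i * (norm (b i))^2)"
      using w0[OF i] by (simp add: algebra_simps)
  qed
  thus ?thesis by (rule abs_summable_summable)
qed

lemma family_form:
  fixes L :: "'i \<Rightarrow> 'x::{real_inner,complete_space} \<Rightarrow> 'z::real_inner"
  assumes addL: "\<And>i x y. L i (x+y) = L i x + L i y"
    and sclL: "\<And>i c x. L i (c *\<^sub>R x) = c *\<^sub>R L i x"
    and w0: "\<And>i. i \<in> S \<Longrightarrow> 0 \<le> w i"
    and summ: "\<And>x. (\<lambda>i. w i * (norm (L i x))^2) summable_on S"
    and bnd: "\<And>x. infsum (\<lambda>i. w i * (norm (L i x))^2) S \<le> M * (norm x)^2"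
  shows "\<exists>!G::'x \<Rightarrow>\<^sub>L 'x. \<forall>x y. inner (G x) y = infsum (\<lambda>i. w i * inner (L i x) (L i y)) S"
proof (rule form_rep)
  have si: "(\<lambda>i. w i * inner (L i x) (L i y)) summable_on S" for x y
    using summable_inner[OF w0 summ summ] .
  show "infsum (\<lambda>i. w i * inner (L i (x + y)) (L i z)) S =
        infsum (\<lambda>i. w i * inner (L i x) (L i z)) S + infsum (\<lambda>i. w i * inner (L i y) (L i z)) S" for x y z
    by (simp add: addL inner_add_left distrib_left infsum_add[OF si si])
  show "infsum (\<lambda>i. w i * inner (L i (c *\<^sub>R x)) (L i z)) S = c * infsum (\<lambda>i. w i * inner (L i x) (L i z)) S" for c x z
    by (simp add: sclL mult.left_commute[of _ c] infsum_cmult_right')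
  show "infsum (\<lambda>i. w i * inner (L i x) (L i y)) S = infsum (\<lambda>i. w i * inner (L i y) (L i x)) S" for x y
    by (simp add: inner_commute)
  show "0 \<le> infsum (\<lambda>i. w i * inner (L i x) (L i x)) S" for x
    by (rule infsum_nonneg) (simp add: w0)
  show "infsum (\<lambda>i. w i * inner (L i x) (L i x)) S \<le> M * (norm x)^2" for x
    using bnd[of x] by (simp add: power2_norm_eq_inner)
qed

lemma finite_cs:
  fixes a :: "'i \<Rightarrow> 'z::real_inner"
  assumes "finite F"
  shows "(\<Sum>u\<in>F. \<Sum>v\<in>F. (norm (a u - a v))^2) =
         2 * (real (card F) * (\<Sum>v\<in>F. (norm (a v))^2) - (norm (\<Sum>v\<in>F. a v))^2)"
proof -
  have e: "(norm (a u - a v))^2 = (norm (a u))^2 + (norm (a v))^2 - 2 * inner (a u) (a v)" for u v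
    by (simp add: power2_norm_eq_inner inner_diff_left inner_diff_right inner_commute)
  have s: "(norm (\<Sum>v\<in>F. a v))^2 = (\<Sum>u\<in>F. \<Sum>v\<in>F. inner (a u) (a v))"
    by (simp add: power2_norm_eq_inner inner_sum_left inner_sum_right) (rule sum.swap)
  have "(\<Sum>u\<in>F. \<Sum>v\<in>F. (norm (a u - a v))^2) =
        (\<Sum>u\<in>F. real (card F) * (norm (a u))^2 + (\<Sum>v\<in>F. (norm (a v))^2) - 2 * (\<Sum>v\<in>F. inner (a u) (a v)))"
    by (simp add: e sum.distrib sum_subtractf sum_distrib_left)
  also have "\<dots> = real (card F) * (\<Sum>u\<in>F. (norm (a u))^2) + real (card F) * (\<Sum>v\<in>F. (norm (a v))^2)
                  - 2 * (\<Sum>u\<in>F. \<Sum>v\<in>F. inner (a u) (a v))"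
    by (simp add: sum.distrib sum_subtractf sum_distrib_left)
  finally show ?thesis unfolding s by simp
qed

lemma fiber_ineq:
  fixes a :: "'i \<Rightarrow> 'z::real_inner"
  assumes "finite F" "w * real (card F) = 1"
  shows "w * (norm (\<Sum>v\<in>F. a v))^2 \<le> (\<Sum>v\<in>F. (norm (a v))^2)"
    and "w * (norm (\<Sum>v\<in>F. a v))^2 = (\<Sum>v\<in>F. (norm (a v))^2) \<Longrightarrow> u \<in> F \<Longrightarrow> v \<in> F \<Longrightarrow> a u = a v"
proof -
  have w0: "w > 0" using assms(2)
    by (metis of_nat_0_le_iff zero_less_one mult_le_0_iff not_le order.strict_iff_not)
  have nn: "0 \<le> (\<Sum>u\<in>F. \<Sum>v\<in>F. (norm (a u - a v))^2)" by (intro sum_nonneg) simp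
  hence "(norm (\<Sum>v\<in>F. a v))^2 \<le> real (card F) * (\<Sum>v\<in>F. (norm (a v))^2)"
    using finite_cs[OF assms(1), of a] by simp
  hence "w * (norm (\<Sum>v\<in>F. a v))^2 \<le> w * (real (card F) * (\<Sum>v\<in>F. (norm (a v))^2))"
    using w0 by simp
  thus "w * (norm (\<Sum>v\<in>F. a v))^2 \<le> (\<Sum>v\<in>F. (norm (a v))^2)"
    using assms(2) by (simp add: mult.assoc[symmetric])
  assume eq: "w * (norm (\<Sum>v\<in>F. a v))^2 = (\<Sum>v\<in>F. (norm (a v))^2)" and uv: "u \<in> F" "v \<in> F"
  have "real (card F) * (w * (norm (\<Sum>v\<in>F. a v))^2) = (norm (\<Sum>v\<in>F. a v))^2"
    using assms(2) by (simp add: mult.assoc[symmetric] mult.commute[of "real (card F)"])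
  hence "(\<Sum>u\<in>F. \<Sum>v\<in>F. (norm (a u - a v))^2) = 0"
    unfolding finite_cs[OF assms(1), of a] using eq by simp
  hence z1: "(\<Sum>u'\<in>F. \<Sum>v'\<in>F. (norm (a u' - a v'))^2) = 0" .
  have "\<forall>u'\<in>F. (\<Sum>v'\<in>F. (norm (a u' - a v'))^2) = 0"
    using sum_nonneg_eq_0_iff[OF assms(1), of "\<lambda>u'. \<Sum>v'\<in>F. (norm (a u' - a v'))^2"] z1
    by (simp add: sum_nonneg)
  hence z2: "(\<Sum>v'\<in>F. (norm (a u - a v'))^2) = 0" using uv(1) by blast
  have "\<forall>v'\<in>F. (norm (a u - a v'))^2 = 0"
    using sum_nonneg_eq_0_iff[OF assms(1), of "\<lambda>v'. (norm (a u - a v'))^2"] z2 by simp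
  hence "(norm (a u - a v))^2 = 0" using uv(2) by blast
  thus "a u = a v" by simp
qed

lemma const_fiber:
  fixes a b :: "'i \<Rightarrow> 'z::real_inner"
  assumes "finite F" "w * real (card F) = 1"
    and "\<And>u v. u \<in> F \<Longrightarrow> v \<in> F \<Longrightarrow> a u = a v \<and> b u = b v"
  shows "w * inner (\<Sum>v\<in>F. a v) (\<Sum>v\<in>F. b v) = (\<Sum>v\<in>F. inner (a v) (b v))"
proof -
  have "card F \<noteq> 0"
  proof
    assume "card F = 0" with assms(2) show False by simp
  qed
  hence "F \<noteq> {}" by auto
  then obtain v0 where v0: "v0 \<in> F" by blast
  have sa: "(\<Sum>v\<in>F. a v) = real (card F) *\<^sub>R a v0"
    using assms(3)[OF _ v0] by (simp add: sum_constant_scaleR[symmetric] cong: sum.cong)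
  have sb: "(\<Sum>v\<in>F. b v) = real (card F) *\<^sub>R b v0"
    using assms(3)[OF _ v0] by (simp add: sum_constant_scaleR[symmetric] cong: sum.cong)
  have si: "(\<Sum>v\<in>F. inner (a v) (b v)) = real (card F) * inner (a v0) (b v0)"
    using assms(3)[OF _ v0] by (simp cong: sum.cong)
  show ?thesis unfolding sa sb si using assms(2)
    by (simp add: mult.assoc[symmetric])
qed

lemma acoef_add: "acoef d C A n (x + y) = acoef d C A n x + acoef d C A n y"
  by (simp add: acoef_def blinfun.add_right sum.distrib)

lemma acoef_scl: "acoef d C A n (c *\<^sub>R x) = c *\<^sub>R acoef d C A n x"
  by (simp add: acoef_def blinfun.scaleR_right scaleR_sum_right)

lemma arv_weight_nonneg: "0 \<le> arv_weight d n"
  unfolding arv_weight_def by (intro divide_nonneg_nonneg prod_nonneg) auto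

theorem proposition3p8:
  fixes d :: nat
    and C :: "'x::{real_inner,complete_space} \<Rightarrow>\<^sub>L 'y::{real_inner,complete_space}"
    and A :: "nat \<Rightarrow> ('x \<Rightarrow>\<^sub>L 'x)"
  assumes "output_stable d C A"
  shows "(a_output_stable d C A \<and> op_le (a_gramian d C A) (gramian d C A)) \<and>
         (a_gramian d C A = gramian d C A \<longleftrightarrow> C_abelian d C A)"
proof -
  have summ: "\<And>x. (\<lambda>v. (norm (C (opw A v x)))\<^sup>2) summable_on words d"
    using assms unfolding output_stable_def by blast
  obtain M where M: "\<And>x. infsum (\<lambda>v. (norm (C (opw A v x)))\<^sup>2) (words d) \<le> M * (norm x)\<^sup>2"
    using assms unfolding output_stable_def by blast
  define P where "P x n = (\<Sum>v\<in>afiber d n. (norm (C (opw A v x)))\<^sup>2)" for x n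
  define q where "q x n = arv_weight d n * (norm (acoef d C A n x))\<^sup>2" for x n
  have Psum: "P x summable_on multi d" for x
    unfolding P_def by (rule partition_sum(1)[OF summ])
  have Pinf: "infsum (P x) (multi d) = infsum (\<lambda>v. (norm (C (opw A v x)))\<^sup>2) (words d)" for x
    unfolding P_def by (rule partition_sum(2)[OF summ])
  have qle: "q x n \<le> P x n" if "n \<in> multi d" for x n
    unfolding q_def P_def acoef_def
    by (rule fiber_ineq(1)[OF finite_afiber card_afiber[OF that]])
  have q0: "0 \<le> q x n" for x n unfolding q_def by (simp add: arv_weight_nonneg)
  have qsum: "q x summable_on multi d" for x
  proof -
    have "(\<lambda>n. norm (P x n)) summable_on multi d"
      by (rule summable_on_iff_abs_summable_on_real[THEN iffD1, OF Psum])
    hence "(\<lambda>n. norm (q x n)) summable_on multi d"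
    proof (rule Infinite_Sum.abs_summable_on_comparison_test)
      fix n assume "n \<in> multi d"
      thus "norm (q x n) \<le> norm (P x n)" using qle[of n x] q0[of x n] by simp
    qed
    thus ?thesis by (rule abs_summable_summable)
  qed
  have qinf: "infsum (q x) (multi d) \<le> infsum (\<lambda>v. (norm (C (opw A v x)))\<^sup>2) (words d)" for x
    unfolding Pinf[symmetric] by (rule infsum_mono[OF qsum Psum qle])
  have aos: "a_output_stable d C A"
    unfolding a_output_stable_def
  proof (intro conjI exI allI)
    show "(\<lambda>n. arv_weight d n * (norm (acoef d C A n x))\<^sup>2) summable_on multi d" for x
      using qsum[of x] unfolding q_def .
    show "infsum (\<lambda>n. arv_weight d n * (norm (acoef d C A n x))\<^sup>2) (multi d) \<le> M * (norm x)\<^sup>2" for x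
      using qinf[of x] M[of x] unfolding q_def by linarith
  qed
  have exG: "\<exists>!G::'x \<Rightarrow>\<^sub>L 'x. \<forall>x y. inner (G x) y =
      infsum (\<lambda>v. inner (C (opw A v x)) (C (opw A v y))) (words d)"
  proof -
    have "\<exists>!G::'x \<Rightarrow>\<^sub>L 'x. \<forall>x y. inner (G x) y =
      infsum (\<lambda>v. (\<lambda>_. 1::real) v * inner (C (opw A v x)) (C (opw A v y))) (words d)"
    proof (rule family_form[where M = M])
      show "C (opw A i (x + y)) = C (opw A i x) + C (opw A i y)" for i x y
        by (simp add: blinfun.add_right)
      show "C (opw A i (c *\<^sub>R x)) = c *\<^sub>R C (opw A i x)" for i c x
        by (simp add: blinfun.scaleR_right)
      show "0 \<le> (1::real)" for i :: "nat list" by simp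
      show "(\<lambda>i. 1 * (norm (C (opw A i x)))\<^sup>2) summable_on words d" for x using summ[of x] by simp
      show "infsum (\<lambda>i. 1 * (norm (C (opw A i x)))\<^sup>2) (words d) \<le> M * (norm x)\<^sup>2" for x using M[of x] by simp
    qed
    thus ?thesis by simp
  qed
  have exGa: "\<exists>!G::'x \<Rightarrow>\<^sub>L 'x. \<forall>x y. inner (G x) y =
      infsum (\<lambda>n. arv_weight d n * inner (acoef d C A n x) (acoef d C A n y)) (multi d)"
  proof (rule family_form[where M = M])
    show "acoef d C A i (x + y) = acoef d C A i x + acoef d C A i y" for i x y by (rule acoef_add)
    show "acoef d C A i (c *\<^sub>R x) = c *\<^sub>R acoef d C A i x" for i c x by (rule acoef_scl)
    show "0 \<le> arv_weight d i" for i by (rule arv_weight_nonneg)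
    show "(\<lambda>i. arv_weight d i * (norm (acoef d C A i x))\<^sup>2) summable_on multi d" for x
      using qsum[of x] unfolding q_def .
    show "infsum (\<lambda>i. arv_weight d i * (norm (acoef d C A i x))\<^sup>2) (multi d) \<le> M * (norm x)\<^sup>2" for x
      using qinf[of x] M[of x] unfolding q_def by linarith
  qed
  have Gp: "\<forall>x y. inner (gramian d C A x) y =
      infsum (\<lambda>v. inner (C (opw A v x)) (C (opw A v y))) (words d)"
    unfolding gramian_def by (rule theI'[OF exG])
  have Gap: "\<forall>x y. inner (a_gramian d C A x) y =
      infsum (\<lambda>n. arv_weight d n * inner (acoef d C A n x) (acoef d C A n y)) (multi d)"
    unfolding a_gramian_def by (rule theI'[OF exGa])
  have Gx: "inner (gramian d C A x) x = infsum (\<lambda>v. (norm (C (opw A v x)))\<^sup>2) (words d)" for x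
    using Gp by (simp add: power2_norm_eq_inner)
  have qfun: "q x = (\<lambda>n. arv_weight d n * inner (acoef d C A n x) (acoef d C A n x))" for x
    by (simp add: q_def fun_eq_iff power2_norm_eq_inner)
  have Gax: "inner (a_gramian d C A x) x = infsum (q x) (multi d)" for x
    unfolding qfun using Gap by simp
  have ople: "op_le (a_gramian d C A) (gramian d C A)"
    unfolding op_le_def using Gx Gax qinf by simp
  have fwd: "C_abelian d C A" if eq: "a_gramian d C A = gramian d C A"
    unfolding C_abelian_def
  proof (intro ballI impI)
    fix u v assume u: "u \<in> words d" and v: "v \<in> words d" and ab: "abel u = abel v"
    define n where "n = abel u"
    have n: "n \<in> multi d" unfolding n_def using abel_multi[OF u] .
    have uf: "u \<in> afiber d n" "v \<in> afiber d n" using u v ab by (simp_all add: afiber_def n_def)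
    show "C o\<^sub>L opw A u = C o\<^sub>L opw A v"
    proof (rule blinfun_eqI)
      fix x
      have "infsum (q x) (multi d) = infsum (P x) (multi d)"
        using Gx[of x] Gax[of x] Pinf[of x] eq by simp
      moreover have sdiff: "(\<lambda>n. P x n - q x n) summable_on multi d"
        using summable_on_add[OF Psum summable_on_uminus[THEN iffD2, OF qsum]] by simp
      moreover have "infsum (\<lambda>n. P x n - q x n) (multi d) = infsum (P x) (multi d) - infsum (q x) (multi d)"
        using infsum_add[OF Psum summable_on_uminus[THEN iffD2, OF qsum]] infsum_uminus[of "q x" "multi d"] by simp
      ultimately have "infsum (\<lambda>n. P x n - q x n) (multi d) = 0" by simp
      hence "P x n - q x n = 0"
        using nonneg_infsum_le_0D[of "\<lambda>n. P x n - q x n" "multi d" n]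
          sdiff qle n by simp
      hence "q x n = P x n" by simp
      hence "C (opw A u x) = C (opw A v x)"
        unfolding q_def P_def acoef_def
        by (rule fiber_ineq(2)[OF finite_afiber card_afiber[OF n] _ uf])
      thus "blinfun_apply (C o\<^sub>L opw A u) x = blinfun_apply (C o\<^sub>L opw A v) x" by simp
    qed
  qed
  have bwd: "a_gramian d C A = gramian d C A" if ca: "C_abelian d C A"
  proof -
    have forms: "infsum (\<lambda>n. arv_weight d n * inner (acoef d C A n x) (acoef d C A n y)) (multi d) =
                 infsum (\<lambda>v. inner (C (opw A v x)) (C (opw A v y))) (words d)" for x y
    proof -
      have si: "(\<lambda>v. inner (C (opw A v x)) (C (opw A v y))) summable_on words d"
        using summable_inner[of "words d" "\<lambda>_. 1" "\<lambda>v. C (opw A v x)" "\<lambda>v. C (opw A v y)"] summ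
        by simp
      have "infsum (\<lambda>n. arv_weight d n * inner (acoef d C A n x) (acoef d C A n y)) (multi d) =
            infsum (\<lambda>n. \<Sum>v\<in>afiber d n. inner (C (opw A v x)) (C (opw A v y))) (multi d)"
      proof (rule infsum_cong)
        fix n assume n: "n \<in> multi d"
        have cst: "C (opw A u z) = C (opw A v z)" if "u \<in> afiber d n" "v \<in> afiber d n" for u v z
        proof -
          have "C o\<^sub>L opw A u = C o\<^sub>L opw A v"
            using ca that unfolding C_abelian_def afiber_def by auto
          hence "blinfun_apply (C o\<^sub>L opw A u) z = blinfun_apply (C o\<^sub>L opw A v) z" by simp
          thus ?thesis by simp
        qed
        show "arv_weight d n * inner (acoef d C A n x) (acoef d C A n y) =
              (\<Sum>v\<in>afiber d n. inner (C (opw A v x)) (C (opw A v y)))"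
          unfolding acoef_def
          by (rule const_fiber[OF finite_afiber card_afiber[OF n]]) (auto intro: cst)
      qed
      also have "\<dots> = infsum (\<lambda>v. inner (C (opw A v x)) (C (opw A v y))) (words d)"
        by (rule partition_sum(2)[OF si])
      finally show ?thesis .
    qed
    have "\<forall>x y. inner (a_gramian d C A x) y =
      infsum (\<lambda>v. inner (C (opw A v x)) (C (opw A v y))) (words d)"
      using Gap forms by simp
    hence "gramian d C A = a_gramian d C A"
      unfolding gramian_def by (rule the1_equality[OF exG])
    thus ?thesis by simp
  qed
  show ?thesis using aos ople fwd bwd by blast
qed

end
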